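(* Let $\Gamma$ be a connected, undirected graph without loops on $n$ nodes with Laplacian $\mathbf L=\mathbf K-\mathbf A$, and let $\phi_1,\dots,\phi_n$ be an orthonormal basis of eigenvectors of $\mathbf L$ with $\mathbf L\phi_j=\mu_j\phi_j$. Let $$\mathbf G=\begin{bmatrix}\mathbf 0&\mathbf I\\-\mathbf I&-\mathbf L\end{bmatrix},\qquad \mathbf U=\mathbf G(\mathbf G^T\mathbf G)^{-1/2},$$ $\lambda_j^{P+}=\tfrac12\big[\sqrt{\mu_j^2+4}+\mu_j\big]$ and $\theta_j=2\arctan\lambda_j^{P+}$. Then the eigenvalues of $\mathbf U$ are the $n$ pairs $$\lambda_j^{U\pm}=\cos\theta_j\pm i\sin\theta_j=e^{\pm i\theta_j},\quad j=1,\dots,n,$$ with corresponding normalized eigenvectors $$\psi_j^{U\pm}=\frac{1}{\sqrt2}\begin{bmatrix}\phi_j\\ \pm i\phi_j\end{bmatrix}.$$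
   Context: $\mathbf A$ is the adjacency matrix, $\mathbf K$ the diagonal degree matrix, $\mathbf I,\mathbf 0$ the $n\times n$ identity and zero matrices; $(\mathbf G^T\mathbf G)^{-1/2}$ is the inverse of the positive definite square root of $\mathbf G^T\mathbf G$. *)

theory Defs
  imports Complex_Main "Jordan_Normal_Form.Jordan_Normal_Form"
begin

definition simple_graph_adj :: "nat \<Rightarrow> real mat \<Rightarrow> bool" where
  "simple_graph_adj n A \<longleftrightarrow> A \<in> carrier_mat n n \<and>
     (\<forall>i<n. \<forall>j<n. (A $$ (i,j) = 0 \<or> A $$ (i,j) = 1) \<and> A $$ (i,j) = A $$ (j,i)) \<and>
     (\<forall>i<n. A $$ (i,i) = 0)"

definition connected_adj :: "nat \<Rightarrow> real mat \<Rightarrow> bool" where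
  "connected_adj n A \<longleftrightarrow>
     (\<forall>i<n. \<forall>j<n. (\<lambda>x y. x < n \<and> y < n \<and> A $$ (x,y) = 1)\<^sup>*\<^sup>* i j)"

definition degree_mat :: "nat \<Rightarrow> real mat \<Rightarrow> real mat" where
  "degree_mat n A = mat n n (\<lambda>(i,j). if i = j then (\<Sum>k<n. A $$ (i,k)) else 0)"

definition laplacian :: "nat \<Rightarrow> real mat \<Rightarrow> real mat" where
  "laplacian n A = degree_mat n A - A"

definition inv_mat :: "real mat \<Rightarrow> real mat" where
  "inv_mat M = (THE B. B \<in> carrier_mat (dim_row M) (dim_row M) \<and>
                 M * B = 1\<^sub>m (dim_row M) \<and> B * M = 1\<^sub>m (dim_row M))"

definition pd_sqrt_mat :: "real mat \<Rightarrow> real mat" where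
  "pd_sqrt_mat M = (THE S. S \<in> carrier_mat (dim_row M) (dim_row M) \<and> transpose_mat S = S \<and>
      (\<forall>v \<in> carrier_vec (dim_row M). v \<noteq> 0\<^sub>v (dim_row M) \<longrightarrow> v \<bullet> (S *\<^sub>v v) > 0) \<and>
      S * S = M)"

definition G_mat :: "nat \<Rightarrow> real mat \<Rightarrow> real mat" where
  "G_mat n L = four_block_mat (0\<^sub>m n n) (1\<^sub>m n) (- 1\<^sub>m n) (- L)"

definition U_mat :: "nat \<Rightarrow> real mat \<Rightarrow> real mat" where
  "U_mat n L = G_mat n L * inv_mat (pd_sqrt_mat (transpose_mat (G_mat n L) * G_mat n L))"

end

theory Submission
  imports Defs
begin


definition fbd :: "nat \<Rightarrow> (nat \<Rightarrow> 'a::comm_ring_1) \<Rightarrow> (nat \<Rightarrow> 'a) \<Rightarrow> (nat \<Rightarrow> 'a) \<Rightarrow> (nat \<Rightarrow> 'a) \<Rightarrow> 'a mat" where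
  "fbd n a b c d = four_block_mat (mat_diag n a) (mat_diag n b) (mat_diag n c) (mat_diag n d)"

lemma fbd_carrier[simp]: "fbd n a b c d \<in> carrier_mat (n+n) (n+n)"
  unfolding fbd_def by auto

lemma fbd_dims[simp]: "dim_row (fbd n a b c d) = n+n" "dim_col (fbd n a b c d) = n+n"
  using fbd_carrier[of n a b c d] by (auto simp del: fbd_carrier)

lemma mat_diag_add: fixes f :: "nat \<Rightarrow> 'a::comm_ring_1" shows "mat_diag n f + mat_diag n g = mat_diag n (\<lambda>k. f k + g k)"
  by (rule eq_matI, auto simp: mat_diag_def)

lemma fbd_mult: "fbd n a b c d * fbd n a' b' c' d' =
  fbd n (\<lambda>k. a k * a' k + b k * c' k) (\<lambda>k. a k * b' k + b k * d' k)
        (\<lambda>k. c k * a' k + d k * c' k) (\<lambda>k. c k * b' k + d k * d' k)"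
  unfolding fbd_def
  by (subst mult_four_block_mat[OF mat_diag_dim mat_diag_dim mat_diag_dim mat_diag_dim mat_diag_dim mat_diag_dim mat_diag_dim mat_diag_dim], auto simp: mat_diag_add)

lemma mat_diag_transpose[simp]: "transpose_mat (mat_diag n f) = mat_diag n f"
  by (rule eq_matI, auto simp: mat_diag_def)

lemma fbd_transpose: "transpose_mat (fbd n a b c d) = fbd n a c b d"
  unfolding fbd_def by (subst transpose_four_block_mat[OF mat_diag_dim mat_diag_dim mat_diag_dim mat_diag_dim], auto)

lemma mat_diag_cong: "(\<And>k. k < n \<Longrightarrow> f k = g k) \<Longrightarrow> mat_diag n f = mat_diag n g"
  by (rule eq_matI, auto simp: mat_diag_def)

lemma fbd_cong: "(\<And>k. k < n \<Longrightarrow> a k = a' k \<and> b k = b' k \<and> c k = c' k \<and> d k = d' k) \<Longrightarrow>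
   fbd n a b c d = fbd n a' b' c' d'"
  unfolding fbd_def by (intro cong_four_block_mat mat_diag_cong, auto)

lemma mat_diag_zero: "mat_diag n (\<lambda>k. 0) = 0\<^sub>m n n"
  by (rule eq_matI, auto simp: mat_diag_def)

lemma fbd_one: "fbd n (\<lambda>k. 1) (\<lambda>k. 0) (\<lambda>k. 0) (\<lambda>k. 1) = 1\<^sub>m (n+n)"
  unfolding fbd_def mat_diag_zero mat_diag_one by simp

lemma map_mat_diag: "h 0 = 0 \<Longrightarrow> map_mat h (mat_diag n f) = mat_diag n (\<lambda>k. h (f k))"
  by (rule eq_matI, auto simp: mat_diag_def)

lemma map_fbd: "h 0 = 0 \<Longrightarrow> map_mat h (fbd n a b c d) = fbd n (\<lambda>k. h (a k)) (\<lambda>k. h (b k)) (\<lambda>k. h (c k)) (\<lambda>k. h (d k))"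
  unfolding fbd_def by (subst map_four_block_mat[OF mat_diag_dim mat_diag_dim mat_diag_dim mat_diag_dim], auto simp: map_mat_diag)

lemma mat_diag_mult_vec: "x \<in> carrier_vec n \<Longrightarrow> mat_diag n f *\<^sub>v x = vec n (\<lambda>i. f i * x $ i)"
proof (rule eq_vecI)
  fix i assume x: "x \<in> carrier_vec n" and i: "i < dim_vec (vec n (\<lambda>i. f i * x $ i))"
  hence i: "i < n" by simp
  have "(mat_diag n f *\<^sub>v x) $ i = (\<Sum>j<n. (if i = j then f j else 0) * x $ j)"
    using x i by (simp add: mat_diag_def mult_mat_vec_def scalar_prod_def lessThan_atLeast0)
  also have "\<dots> = (\<Sum>j<n. if i = j then f j * x $ j else 0)" by (rule sum.cong, auto)
  also have "\<dots> = f i * x $ i" using i by simp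
  finally show "(mat_diag n f *\<^sub>v x) $ i = vec n (\<lambda>i. f i * x $ i) $ i" using i by simp
qed (auto simp: mat_diag_def)

lemma fbd_quad:
  fixes w :: "'a::comm_ring_1 vec"
  assumes w: "w \<in> carrier_vec (n+n)"
  shows "w \<bullet> (fbd n a b c d *\<^sub>v w) = (\<Sum>i<n. a i * w$i * w$i + (b i + c i) * w$i * w$(n+i) + d i * w$(n+i) * w$(n+i))"
proof -
  define x where "x = vec_first w n"
  define y where "y = vec_last w n"
  have x: "x \<in> carrier_vec n" and y: "y \<in> carrier_vec n" unfolding x_def y_def by auto
  have wxy: "w = x @\<^sub>v y" unfolding x_def y_def using w by simp
  have xi: "\<And>i. i < n \<Longrightarrow> x $ i = w $ i" unfolding x_def vec_first_def by simp
  have yi: "\<And>i. i < n \<Longrightarrow> y $ i = w $ (n+i)" unfolding y_def vec_last_def using w by simp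
  have "fbd n a b c d *\<^sub>v w = (mat_diag n a *\<^sub>v x + mat_diag n b *\<^sub>v y) @\<^sub>v (mat_diag n c *\<^sub>v x + mat_diag n d *\<^sub>v y)"
    unfolding fbd_def wxy by (rule four_block_mat_mult_vec[OF mat_diag_dim mat_diag_dim mat_diag_dim mat_diag_dim x y])
  also have "\<dots> = vec n (\<lambda>i. a i * x$i + b i * y$i) @\<^sub>v vec n (\<lambda>i. c i * x$i + d i * y$i)"
    using x y by (simp add: mat_diag_mult_vec, intro conjI eq_vecI, auto)
  finally have e: "fbd n a b c d *\<^sub>v w = vec n (\<lambda>i. a i * x$i + b i * y$i) @\<^sub>v vec n (\<lambda>i. c i * x$i + d i * y$i)" .
  have "w \<bullet> (fbd n a b c d *\<^sub>v w) = x \<bullet> vec n (\<lambda>i. a i * x$i + b i * y$i) + y \<bullet> vec n (\<lambda>i. c i * x$i + d i * y$i)"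
    unfolding e by (subst wxy, rule scalar_prod_append[OF x y], auto)
  also have "\<dots> = (\<Sum>i<n. x$i * (a i * x$i + b i * y$i)) + (\<Sum>i<n. y$i * (c i * x$i + d i * y$i))"
    using x y by (simp add: scalar_prod_def lessThan_atLeast0)
  also have "\<dots> = (\<Sum>i<n. a i * w$i * w$i + (b i + c i) * w$i * w$(n+i) + d i * w$(n+i) * w$(n+i))"
    unfolding sum.distrib[symmetric] by (rule sum.cong, auto simp: xi yi algebra_simps)
  finally show ?thesis .
qed


definition pdm :: "nat \<Rightarrow> real mat \<Rightarrow> bool" where
  "pdm m S \<longleftrightarrow> (\<forall>v \<in> carrier_vec m. v \<noteq> 0\<^sub>v m \<longrightarrow> v \<bullet> (S *\<^sub>v v) > 0)"

lemma pdm_nonneg: assumes "pdm m S" "S \<in> carrier_mat m m" "v \<in> carrier_vec m"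
  shows "v \<bullet> (S *\<^sub>v v) \<ge> 0"
proof (cases "v = 0\<^sub>v m")
  case True thus ?thesis using assms by simp
next
  case False thus ?thesis using assms unfolding pdm_def by force
qed

definition tr :: "'a::comm_ring_1 mat \<Rightarrow> 'a" where
  "tr A = (\<Sum>i<dim_row A. A $$ (i,i))"

lemma tr_comm: assumes "A \<in> carrier_mat m k" "B \<in> carrier_mat k m"
  shows "tr (A * B) = tr (B * A)"
proof -
  have "tr (A * B) = (\<Sum>i<m. \<Sum>j<k. A $$ (i,j) * B $$ (j,i))"
    using assms by (simp add: tr_def scalar_prod_def lessThan_atLeast0)
  also have "\<dots> = (\<Sum>j<k. \<Sum>i<m. B $$ (j,i) * A $$ (i,j))"
    by (subst sum.swap, simp add: mult.commute)
  also have "\<dots> = tr (B * A)"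
    using assms by (simp add: tr_def scalar_prod_def lessThan_atLeast0)
  finally show ?thesis .
qed

lemma tr_add: assumes "A \<in> carrier_mat m m" "B \<in> carrier_mat m m"
  shows "tr (A + B) = tr A + tr B"
  using assms by (simp add: tr_def sum.distrib)

lemma tr_quad: assumes X: "X \<in> carrier_mat m m" and Xs: "transpose_mat X = X"
  and A: "A \<in> carrier_mat m m"
  shows "tr (X * (A * X)) = (\<Sum>k<m. col X k \<bullet> (A *\<^sub>v col X k))"
proof -
  have "tr (X * (A * X)) = (\<Sum>k<m. row X k \<bullet> col (A * X) k)"
    using X A by (simp add: tr_def)
  also have "\<dots> = (\<Sum>k<m. col X k \<bullet> (A *\<^sub>v col X k))"
  proof (rule sum.cong[OF refl])
    fix k assume k: "k \<in> {..<m}"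
    have "row X k = col (transpose_mat X) k" using X k by simp
    hence "row X k = col X k" using Xs by simp
    moreover have "col (A * X) k = A *\<^sub>v col X k" using X A k by (intro col_mult2, auto)
    ultimately show "row X k \<bullet> col (A * X) k = col X k \<bullet> (A *\<^sub>v col X k)" by simp
  qed
  finally show ?thesis .
qed

lemma sym_entry: assumes "transpose_mat S = S" "S \<in> carrier_mat m m" "i < m" "j < m"
  shows "S $$ (j,i) = S $$ (i,j)"
proof -
  have "transpose_mat S $$ (i,j) = S $$ (j,i)" using assms(2-4) by simp
  thus ?thesis using assms(1) by simp
qed

lemma pd_sqrt_unique:
  assumes S: "S \<in> carrier_mat m m" and T: "T \<in> carrier_mat m m"
    and Ss: "transpose_mat S = S" and Ts: "transpose_mat T = T"
    and Sp: "pdm m S" and Tp: "pdm m T" and eq: "S * S = T * T"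
  shows "S = T"
proof -
  define X where "X = S - T"
  have X: "X \<in> carrier_mat m m" unfolding X_def using S T by (simp add: minus_carrier_mat)
  have Xs: "transpose_mat X = X" unfolding X_def
  proof (rule eq_matI)
    fix i j assume ij: "i < dim_row (S - T)" "j < dim_col (S - T)"
    hence ij': "i < m" "j < m" using S T by auto
    show "transpose_mat (S - T) $$ (i, j) = (S - T) $$ (i, j)"
      using ij' S T sym_entry[OF Ss S ij'] sym_entry[OF Ts T ij'] by simp
  qed (insert S T, auto)
  have Z: "S * X + X * T = 0\<^sub>m m m"
  proof (rule eq_matI)
    fix i j assume ij: "i < dim_row (0\<^sub>m m m :: real mat)" "j < dim_col (0\<^sub>m m m :: real mat)"
    have "S * X = S * S - S * T" unfolding X_def using S T by (simp add: mult_minus_distrib_mat)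
    moreover have "X * T = S * T - T * T" unfolding X_def using S T by (simp add: minus_mult_distrib_mat)
    moreover have "(S * S) $$ (i,j) = (T * T) $$ (i,j)" using eq by simp
    ultimately show "(S * X + X * T) $$ (i, j) = 0\<^sub>m m m $$ (i, j)"
      using ij carrier_matD[OF S] carrier_matD[OF T] by (simp del: index_mult_mat(1))
  qed (insert S T X, auto)
  have "tr (X * (S * X + X * T)) = 0" unfolding Z using X by (simp add: tr_def)
  moreover have "tr (X * (S * X + X * T)) = tr (X * (S * X)) + tr (X * (X * T))"
    using X S T by (subst mult_add_distrib_mat[of _ m m], auto intro!: tr_add[of _ m])
  moreover have "tr (X * (X * T)) = tr (X * (T * X))"
  proof -
    have "tr (X * (X * T)) = tr ((X * T) * X)" by (rule tr_comm[OF X], insert X T, auto)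
    thus ?thesis using X T by simp
  qed
  ultimately have sum0: "(\<Sum>k<m. col X k \<bullet> (S *\<^sub>v col X k)) + (\<Sum>k<m. col X k \<bullet> (T *\<^sub>v col X k)) = 0"
    using tr_quad[OF X Xs S] tr_quad[OF X Xs T] by simp
  have nn: "\<And>A k. A \<in> carrier_mat m m \<Longrightarrow> pdm m A \<Longrightarrow> col X k \<bullet> (A *\<^sub>v col X k) \<ge> 0"
    by (rule pdm_nonneg, insert X, auto)
  have s1: "(\<Sum>k<m. col X k \<bullet> (S *\<^sub>v col X k)) \<ge> 0"
    by (rule sum_nonneg, rule nn[OF S Sp])
  have s2: "(\<Sum>k<m. col X k \<bullet> (T *\<^sub>v col X k)) \<ge> 0"
    by (rule sum_nonneg, rule nn[OF T Tp])
  have "(\<Sum>k<m. col X k \<bullet> (S *\<^sub>v col X k)) = 0"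
    using sum0 s1 s2 by linarith
  hence "\<forall>k\<in>{..<m}. col X k \<bullet> (S *\<^sub>v col X k) = 0"
    using sum_nonneg_eq_0_iff[of "{..<m}" "\<lambda>k. col X k \<bullet> (S *\<^sub>v col X k)"] nn[OF S Sp] by auto
  hence colz: "\<And>k. k < m \<Longrightarrow> col X k = 0\<^sub>v m"
    using Sp X unfolding pdm_def by force
  have "X = 0\<^sub>m m m"
  proof (rule eq_matI)
    fix i j assume "i < dim_row (0\<^sub>m m m :: real mat)" "j < dim_col (0\<^sub>m m m :: real mat)"
    hence ij: "i < m" "j < m" by auto
    have "X $$ (i,j) = col X j $ i" using X ij by simp
    thus "X $$ (i,j) = 0\<^sub>m m m $$ (i,j)" using colz[OF ij(2)] ij by simp
  qed (insert X, auto)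
  show "S = T"
  proof (rule eq_matI)
    fix i j assume ij: "i < dim_row T" "j < dim_col T"
    have "X $$ (i,j) = 0" using \<open>X = 0\<^sub>m m m\<close> ij T by simp
    thus "S $$ (i,j) = T $$ (i,j)" unfolding X_def using ij S T by simp
  qed (insert S T, auto)
qed


lemma sum_split_nn: fixes n :: nat shows "(\<Sum>i<n+n. f i) = (\<Sum>i<n. f i) + (\<Sum>i<n. f (n+i))"
proof -
  have "(\<Sum>i<n+n. f i) = sum f {0..<n} + sum f {n..<n+n}"
    by (simp add: lessThan_atLeast0 sum.atLeastLessThan_concat)
  also have "sum f {n..<n+n} = (\<Sum>i<n. f (n+i))"
    using sum.shift_bounds_nat_ivl[of f 0 n n] by (simp add: lessThan_atLeast0 add.commute)
  finally show ?thesis by (simp add: lessThan_atLeast0)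
qed

lemma prod_split_nn: fixes n :: nat shows "(\<Prod>i<n+n. f i) = (\<Prod>i<n. f i) * (\<Prod>i<n. f (n+i))"
proof -
  have "(\<Prod>i<n+n. f i) = prod f {0..<n} * prod f {n..<n+n}"
    by (simp add: lessThan_atLeast0 prod.atLeastLessThan_concat)
  also have "prod f {n..<n+n} = (\<Prod>i<n. f (n+i))"
    using prod.shift_bounds_nat_ivl[of f 0 n n] by (simp add: lessThan_atLeast0 add.commute)
  finally show ?thesis by (simp add: lessThan_atLeast0)
qed

lemma trig_facts:
  fixes m :: real
  defines "r \<equiv> sqrt (m\<^sup>2 + 4)"
  defines "\<theta> \<equiv> 2 * arctan ((sqrt (m\<^sup>2 + 4) + m) / 2)"
  shows "cos \<theta> = - m / r" "sin \<theta> = 2 / r"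
proof -
  define l where "l = (r + m) / 2"
  have r2: "r\<^sup>2 = m\<^sup>2 + 4" unfolding r_def by simp
  have rpos: "r > 0" unfolding r_def by (smt (verit) zero_le_power2 real_sqrt_gt_zero)
  have rm: "r > \<bar>m\<bar>" unfolding r_def
    by (rule real_less_rsqrt, simp)
  have rmpos: "r + m > 0" using rm by linarith
  have th: "\<theta> = 2 * arctan l" unfolding \<theta>_def l_def r_def by simp
  have s: "sqrt (1 + l\<^sup>2) > 0" by (smt (verit) zero_le_power2 real_sqrt_gt_zero)
  have s2: "(sqrt (1 + l\<^sup>2))\<^sup>2 = 1 + l\<^sup>2" by (smt (verit) zero_le_power2 real_sqrt_pow2)
  have c: "cos \<theta> = (1 - l\<^sup>2) / (1 + l\<^sup>2)"
    unfolding th cos_double cos_arctan sin_arctan using s s2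
    by (simp add: power_divide diff_divide_distrib)
  have sn: "sin \<theta> = 2 * l / (1 + l\<^sup>2)"
    unfolding th sin_double cos_arctan sin_arctan using s s2
    by (simp add: power2_eq_square[symmetric])
  have l1: "1 + l\<^sup>2 = r * (r + m) / 2" unfolding l_def using r2
    by (simp add: power2_eq_square field_simps)
  have l2: "1 - l\<^sup>2 = - m * (r + m) / 2" unfolding l_def using r2
    by (simp add: power2_eq_square field_simps)
  have nz: "r + m \<noteq> 0" "r \<noteq> 0" using rpos rmpos by auto
  have "(- m * (r + m) / 2) / (r * (r + m) / 2) = (-m * (r + m)) / (r * (r + m))" by simp
  also have "\<dots> = -m / r" using nz by simp
  finally show "cos \<theta> = - m / r" unfolding c l1 l2 .
  have "2 * l = r + m" unfolding l_def by simp
  hence "sin \<theta> = (r + m) / (r * (r + m) / 2)" unfolding sn l1 by simp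
  also have "\<dots> = 2 * (r + m) / (r * (r + m))" by simp
  also have "\<dots> = 2 / r" using nz by (metis mult_divide_mult_cancel_right)
  finally show "sin \<theta> = 2 / r" .
qed


definition Phi :: "nat \<Rightarrow> (nat \<Rightarrow> real vec) \<Rightarrow> real mat" where
  "Phi n \<phi> = mat n n (\<lambda>(i,j). \<phi> j $ i)"

definition Qm :: "nat \<Rightarrow> (nat \<Rightarrow> real vec) \<Rightarrow> real mat" where
  "Qm n \<phi> = four_block_mat (Phi n \<phi>) (0\<^sub>m n n) (0\<^sub>m n n) (Phi n \<phi>)"

definition rr :: "(nat \<Rightarrow> real) \<Rightarrow> nat \<Rightarrow> real" where
  "rr \<mu> k = sqrt ((\<mu> k)\<^sup>2 + 4)"

lemma rr_pos: "rr \<mu> k > 0" unfolding rr_def by (smt (verit) zero_le_power2 real_sqrt_gt_zero)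
lemma rr_sq: "(rr \<mu> k)\<^sup>2 = (\<mu> k)\<^sup>2 + 4" unfolding rr_def by (smt (verit) zero_le_power2 real_sqrt_pow2)

lemma Phi_carrier[simp]: "Phi n \<phi> \<in> carrier_mat n n" unfolding Phi_def by simp
lemma Phi_dims[simp]: "dim_row (Phi n \<phi>) = n" "dim_col (Phi n \<phi>) = n" unfolding Phi_def by auto
lemma mat_diag_dims[simp]: "dim_row (mat_diag n f) = n" "dim_col (mat_diag n f) = n" unfolding mat_diag_def by auto
lemma Qm_carrier[simp]: "Qm n \<phi> \<in> carrier_mat (n+n) (n+n)" unfolding Qm_def by simp

context
  fixes n :: nat and L :: "real mat" and \<phi> :: "nat \<Rightarrow> real vec" and \<mu> :: "nat \<Rightarrow> real"
  assumes L: "L \<in> carrier_mat n n"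
    and phi_dim: "\<And>j. j < n \<Longrightarrow> \<phi> j \<in> carrier_vec n"
    and phi_eig: "\<And>j. j < n \<Longrightarrow> L *\<^sub>v \<phi> j = \<mu> j \<cdot>\<^sub>v \<phi> j"
    and phi_on: "\<And>i j. i < n \<Longrightarrow> j < n \<Longrightarrow> \<phi> i \<bullet> \<phi> j = (if i = j then 1 else 0)"
begin

lemma col_Phi: assumes j: "j < n" shows "col (Phi n \<phi>) j = \<phi> j"
proof -
  have d: "dim_vec (\<phi> j) = n" using phi_dim[OF j] by auto
  show ?thesis by (rule eq_vecI, insert j d, auto simp: Phi_def)
qed

lemma PhiT_Phi: "transpose_mat (Phi n \<phi>) * Phi n \<phi> = 1\<^sub>m n"
proof (rule eq_matI)
  fix i j assume "i < dim_row (1\<^sub>m n :: real mat)" "j < dim_col (1\<^sub>m n :: real mat)"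
  hence ij: "i < n" "j < n" by auto
  have "(transpose_mat (Phi n \<phi>) * Phi n \<phi>) $$ (i,j) = col (Phi n \<phi>) i \<bullet> col (Phi n \<phi>) j"
    using ij by simp
  also have "\<dots> = \<phi> i \<bullet> \<phi> j" using ij by (simp add: col_Phi)
  finally show "(transpose_mat (Phi n \<phi>) * Phi n \<phi>) $$ (i,j) = 1\<^sub>m n $$ (i,j)"
    using ij phi_on by simp
qed auto

lemma Phi_PhiT: "Phi n \<phi> * transpose_mat (Phi n \<phi>) = 1\<^sub>m n"
  by (rule mat_mult_left_right_inverse[OF _ _ PhiT_Phi], auto)

lemma L_Phi: "L * Phi n \<phi> = Phi n \<phi> * mat_diag n \<mu>"
proof (rule eq_matI)
  fix i j assume "i < dim_row (Phi n \<phi> * mat_diag n \<mu>)" "j < dim_col (Phi n \<phi> * mat_diag n \<mu>)"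
  hence ij: "i < n" "j < n" by auto
  have "(L * Phi n \<phi>) $$ (i,j) = row L i \<bullet> \<phi> j" using ij L by (simp add: col_Phi)
  also have "\<dots> = (L *\<^sub>v \<phi> j) $ i" using ij L by simp
  also have "\<dots> = \<mu> j * \<phi> j $ i" using ij phi_eig[OF ij(2)] phi_dim[OF ij(2)] by simp
  finally show "(L * Phi n \<phi>) $$ (i,j) = (Phi n \<phi> * mat_diag n \<mu>) $$ (i,j)"
    using ij by (simp add: mat_diag_mult_right[of _ n n] Phi_def)
qed (insert L, auto)

lemma QT_Q: "transpose_mat (Qm n \<phi>) * Qm n \<phi> = 1\<^sub>m (n+n)"
proof -
  have PT: "transpose_mat (Phi n \<phi>) \<in> carrier_mat n n" by simp
  have T: "transpose_mat (Qm n \<phi>) = four_block_mat (transpose_mat (Phi n \<phi>)) (0\<^sub>m n n) (0\<^sub>m n n) (transpose_mat (Phi n \<phi>))"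
    unfolding Qm_def by (subst transpose_four_block_mat[OF Phi_carrier zero_carrier_mat zero_carrier_mat Phi_carrier], simp)
  show ?thesis unfolding T unfolding Qm_def
    by (subst mult_four_block_mat[OF PT zero_carrier_mat zero_carrier_mat PT Phi_carrier zero_carrier_mat zero_carrier_mat Phi_carrier],
        simp add: PhiT_Phi)
qed

lemma Q_QT: "Qm n \<phi> * transpose_mat (Qm n \<phi>) = 1\<^sub>m (n+n)"
  by (rule mat_mult_left_right_inverse[OF _ _ QT_Q], auto)

end


definition Gp :: "nat \<Rightarrow> (nat \<Rightarrow> real) \<Rightarrow> real mat" where
  "Gp n \<mu> = fbd n (\<lambda>k. 0) (\<lambda>k. 1) (\<lambda>k. -1) (\<lambda>k. - \<mu> k)"
definition Sp :: "nat \<Rightarrow> (nat \<Rightarrow> real) \<Rightarrow> real mat" where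
  "Sp n \<mu> = fbd n (\<lambda>k. 2 / rr \<mu> k) (\<lambda>k. \<mu> k / rr \<mu> k) (\<lambda>k. \<mu> k / rr \<mu> k) (\<lambda>k. (2 + (\<mu> k)\<^sup>2) / rr \<mu> k)"
definition Sip :: "nat \<Rightarrow> (nat \<Rightarrow> real) \<Rightarrow> real mat" where
  "Sip n \<mu> = fbd n (\<lambda>k. (2 + (\<mu> k)\<^sup>2) / rr \<mu> k) (\<lambda>k. - \<mu> k / rr \<mu> k) (\<lambda>k. - \<mu> k / rr \<mu> k) (\<lambda>k. 2 / rr \<mu> k)"
definition Up :: "nat \<Rightarrow> (nat \<Rightarrow> real) \<Rightarrow> real mat" where
  "Up n \<mu> = fbd n (\<lambda>k. - \<mu> k / rr \<mu> k) (\<lambda>k. 2 / rr \<mu> k) (\<lambda>k. - 2 / rr \<mu> k) (\<lambda>k. - \<mu> k / rr \<mu> k)"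
definition Mp :: "nat \<Rightarrow> (nat \<Rightarrow> real) \<Rightarrow> real mat" where
  "Mp n \<mu> = fbd n (\<lambda>k. 1) (\<lambda>k. \<mu> k) (\<lambda>k. \<mu> k) (\<lambda>k. 1 + (\<mu> k)\<^sup>2)"

lemma rr_nz[simp]: "rr \<mu> k \<noteq> 0" using rr_pos[of \<mu> k] by simp

lemma sc_ids: fixes m r :: real assumes r: "r \<noteq> 0" and r2: "r * r = m * m + 4"
  shows "2 / r * (2 / r) + m / r * (m / r) = 1"
    "2 / r * (m / r) + m / r * ((2 + m\<^sup>2) / r) = m"
    "m / r * (2 / r) + (2 + m\<^sup>2) / r * (m / r) = m"
    "m / r * (m / r) + (2 + m\<^sup>2) / r * ((2 + m\<^sup>2) / r) = 1 + m\<^sup>2"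
    "2 / r * ((2 + m\<^sup>2) / r) + m / r * (- m / r) = 1"
    "2 / r * (- m / r) + m / r * (2 / r) = 0"
    "m / r * ((2 + m\<^sup>2) / r) + (2 + m\<^sup>2) / r * (- m / r) = 0"
    "m / r * (- m / r) + (2 + m\<^sup>2) / r * (2 / r) = 1"
proof -
  have k: "\<And>a b. a / r * (b / r) = a * b / (m * m + 4)"
    by (simp add: times_divide_times_eq r2)
  have d: "m * m + 4 \<noteq> 0" by (smt (verit) zero_le_square)
  show "2 / r * (2 / r) + m / r * (m / r) = 1"
    "2 / r * (m / r) + m / r * ((2 + m\<^sup>2) / r) = m"
    "m / r * (2 / r) + (2 + m\<^sup>2) / r * (m / r) = m"
    "m / r * (m / r) + (2 + m\<^sup>2) / r * ((2 + m\<^sup>2) / r) = 1 + m\<^sup>2"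
    "2 / r * ((2 + m\<^sup>2) / r) + m / r * (- m / r) = 1"
    "2 / r * (- m / r) + m / r * (2 / r) = 0"
    "m / r * ((2 + m\<^sup>2) / r) + (2 + m\<^sup>2) / r * (- m / r) = 0"
    "m / r * (- m / r) + (2 + m\<^sup>2) / r * (2 / r) = 1"
    unfolding k add_divide_distrib[symmetric] using d by (simp_all add: divide_eq_eq power2_eq_square algebra_simps)
qed

lemma Gp_carrier[simp]: "Gp n \<mu> \<in> carrier_mat (n+n) (n+n)" unfolding Gp_def by simp
lemma Sp_carrier[simp]: "Sp n \<mu> \<in> carrier_mat (n+n) (n+n)" unfolding Sp_def by simp
lemma Sip_carrier[simp]: "Sip n \<mu> \<in> carrier_mat (n+n) (n+n)" unfolding Sip_def by simp
lemma Up_carrier[simp]: "Up n \<mu> \<in> carrier_mat (n+n) (n+n)" unfolding Up_def by simp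
lemma Mp_carrier[simp]: "Mp n \<mu> \<in> carrier_mat (n+n) (n+n)" unfolding Mp_def by simp

lemma GpT_Gp: "transpose_mat (Gp n \<mu>) * Gp n \<mu> = Mp n \<mu>"
  unfolding Gp_def Mp_def fbd_transpose fbd_mult by (rule fbd_cong, simp add: power2_eq_square)

lemma Sp_sq: "Sp n \<mu> * Sp n \<mu> = Mp n \<mu>"
  unfolding Sp_def Mp_def fbd_mult
proof (rule fbd_cong)
  fix k
  have r: "rr \<mu> k \<noteq> 0" using rr_pos[of \<mu> k] by simp
  have r2: "rr \<mu> k * rr \<mu> k = \<mu> k * \<mu> k + 4" using rr_sq[of \<mu> k] by (simp add: power2_eq_square)
  show "2 / rr \<mu> k * (2 / rr \<mu> k) + \<mu> k / rr \<mu> k * (\<mu> k / rr \<mu> k) = 1 \<and>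
        2 / rr \<mu> k * (\<mu> k / rr \<mu> k) + \<mu> k / rr \<mu> k * ((2 + (\<mu> k)\<^sup>2) / rr \<mu> k) = \<mu> k \<and>
        \<mu> k / rr \<mu> k * (2 / rr \<mu> k) + (2 + (\<mu> k)\<^sup>2) / rr \<mu> k * (\<mu> k / rr \<mu> k) = \<mu> k \<and>
        \<mu> k / rr \<mu> k * (\<mu> k / rr \<mu> k) + (2 + (\<mu> k)\<^sup>2) / rr \<mu> k * ((2 + (\<mu> k)\<^sup>2) / rr \<mu> k) = 1 + (\<mu> k)\<^sup>2"
    using sc_ids[OF r r2] by simp
qed

lemma Sp_Sip: "Sp n \<mu> * Sip n \<mu> = 1\<^sub>m (n+n)"
  unfolding Sp_def Sip_def fbd_mult fbd_one[symmetric]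
proof (rule fbd_cong)
  fix k
  have r: "rr \<mu> k \<noteq> 0" using rr_pos[of \<mu> k] by simp
  have r2: "rr \<mu> k * rr \<mu> k = \<mu> k * \<mu> k + 4" using rr_sq[of \<mu> k] by (simp add: power2_eq_square)
  show "2 / rr \<mu> k * ((2 + (\<mu> k)\<^sup>2) / rr \<mu> k) + \<mu> k / rr \<mu> k * (- \<mu> k / rr \<mu> k) = 1 \<and>
    2 / rr \<mu> k * (- \<mu> k / rr \<mu> k) + \<mu> k / rr \<mu> k * (2 / rr \<mu> k) = 0 \<and>
    \<mu> k / rr \<mu> k * ((2 + (\<mu> k)\<^sup>2) / rr \<mu> k) + (2 + (\<mu> k)\<^sup>2) / rr \<mu> k * (- \<mu> k / rr \<mu> k) = 0 \<and>
    \<mu> k / rr \<mu> k * (- \<mu> k / rr \<mu> k) + (2 + (\<mu> k)\<^sup>2) / rr \<mu> k * (2 / rr \<mu> k) = 1"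
    using sc_ids[OF r r2] by simp
qed

lemma Sip_Sp: "Sip n \<mu> * Sp n \<mu> = 1\<^sub>m (n+n)"
  by (rule mat_mult_left_right_inverse[OF _ _ Sp_Sip], auto)

lemma Gp_Sip: "Gp n \<mu> * Sip n \<mu> = Up n \<mu>"
  unfolding Gp_def Sip_def Up_def fbd_mult
proof (rule fbd_cong)
  fix k
  have r: "rr \<mu> k \<noteq> 0" by simp
  have e: "(-1) * ((2 + (\<mu> k)\<^sup>2) / rr \<mu> k) + (- \<mu> k) * (- \<mu> k / rr \<mu> k) = - 2 / rr \<mu> k"
    by (simp add: power2_eq_square diff_divide_distrib add_divide_distrib)
  have e2: "(-1) * (- \<mu> k / rr \<mu> k) + (- \<mu> k) * (2 / rr \<mu> k) = - \<mu> k / rr \<mu> k"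
    by (simp add: diff_divide_distrib add_divide_distrib)
  show "0 * ((2 + (\<mu> k)\<^sup>2) / rr \<mu> k) + 1 * (- \<mu> k / rr \<mu> k) = - \<mu> k / rr \<mu> k \<and>
        0 * (- \<mu> k / rr \<mu> k) + 1 * (2 / rr \<mu> k) = 2 / rr \<mu> k \<and>
        (-1) * ((2 + (\<mu> k)\<^sup>2) / rr \<mu> k) + (- \<mu> k) * (- \<mu> k / rr \<mu> k) = - 2 / rr \<mu> k \<and>
        (-1) * (- \<mu> k / rr \<mu> k) + (- \<mu> k) * (2 / rr \<mu> k) = - \<mu> k / rr \<mu> k"
    using e e2 by simp
qed

lemma quad_pos: assumes r: "r > 0" and nz: "x \<noteq> 0 \<or> y \<noteq> 0"
  shows "2 / r * x * x + (m / r + m / r) * x * y + (2 + m\<^sup>2) / r * y * y > (0::real)"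
proof -
  have "2 * x * x + 2 * m * x * y + (2 + m\<^sup>2) * y * y = x\<^sup>2 + (x + m * y)\<^sup>2 + 2 * y\<^sup>2"
    by (simp add: power2_eq_square algebra_simps)
  moreover have "x\<^sup>2 + (x + m * y)\<^sup>2 + 2 * y\<^sup>2 > 0" 
  proof -
    have "x\<^sup>2 > 0 \<or> y\<^sup>2 > 0" using nz by auto
    moreover have "x\<^sup>2 \<ge> 0" "(x + m * y)\<^sup>2 \<ge> 0" "y\<^sup>2 \<ge> 0" by auto
    ultimately show ?thesis by linarith
  qed
  ultimately have "2 * x * x + 2 * m * x * y + (2 + m\<^sup>2) * y * y > 0" by simp
  hence "(2 * x * x + 2 * m * x * y + (2 + m\<^sup>2) * y * y) / r > 0" using r by simp
  moreover have "2 / r * x * x + (m / r + m / r) * x * y + (2 + m\<^sup>2) / r * y * y =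
     (2 * x * x + 2 * m * x * y + (2 + m\<^sup>2) * y * y) / r" using r by (simp add: field_simps)
  ultimately show ?thesis by simp
qed

lemma Sp_pd: "pdm (n+n) (Sp n \<mu>)"
  unfolding pdm_def
proof (intro ballI impI)
  fix w :: "real vec" assume w: "w \<in> carrier_vec (n+n)" and nz: "w \<noteq> 0\<^sub>v (n+n)"
  from nz w obtain t where t: "t < n+n" "w $ t \<noteq> 0" by (metis eq_vecI carrier_vecD index_zero_vec)
  define i where "i = (if t < n then t else t - n)"
  have i: "i < n" using t unfolding i_def by auto
  have wi: "w $ i \<noteq> 0 \<or> w $ (n+i) \<noteq> 0" using t unfolding i_def by (cases "t < n", auto)
  let ?f = "\<lambda>i. 2 / rr \<mu> i * w $ i * w $ i + (\<mu> i / rr \<mu> i + \<mu> i / rr \<mu> i) * w $ i * w $ (n + i) +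
     (2 + (\<mu> i)\<^sup>2) / rr \<mu> i * w $ (n + i) * w $ (n + i)"
  have pos: "\<And>i. w $ i \<noteq> 0 \<or> w $ (n+i) \<noteq> 0 \<Longrightarrow> ?f i > 0"
    by (rule quad_pos[OF rr_pos])
  have nn: "\<And>i. ?f i \<ge> 0"
  proof -
    fix i show "?f i \<ge> 0"
      by (cases "w $ i \<noteq> 0 \<or> w $ (n+i) \<noteq> 0", insert pos[of i], auto)
  qed
  have "w \<bullet> (Sp n \<mu> *\<^sub>v w) = (\<Sum>i<n. ?f i)" unfolding Sp_def by (rule fbd_quad[OF w])
  also have "\<dots> > 0" by (rule sum_pos2[of "{..<n}" i], insert i pos[OF wi] nn, auto)
  finally show "w \<bullet> (Sp n \<mu> *\<^sub>v w) > 0" .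
qed

lemma Sp_sym: "transpose_mat (Sp n \<mu>) = Sp n \<mu>"
  unfolding Sp_def fbd_transpose by simp


context
  fixes n :: nat and L :: "real mat" and \<phi> :: "nat \<Rightarrow> real vec" and \<mu> :: "nat \<Rightarrow> real"
  assumes L: "L \<in> carrier_mat n n"
    and phi_dim: "\<And>j. j < n \<Longrightarrow> \<phi> j \<in> carrier_vec n"
    and phi_eig: "\<And>j. j < n \<Longrightarrow> L *\<^sub>v \<phi> j = \<mu> j \<cdot>\<^sub>v \<phi> j"
    and phi_on: "\<And>i j. i < n \<Longrightarrow> j < n \<Longrightarrow> \<phi> i \<bullet> \<phi> j = (if i = j then 1 else 0)"
begin

lemma G_Q: "G_mat n L * Qm n \<phi> = Qm n \<phi> * Gp n \<mu>"
proof -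
  let ?P = "Phi n \<phi>"
  have P: "?P \<in> carrier_mat n n" by simp
  have mL: "- L \<in> carrier_mat n n" using L by simp
  have m1: "- 1\<^sub>m n \<in> carrier_mat n n" by simp
  have lhs: "G_mat n L * Qm n \<phi> = four_block_mat (0\<^sub>m n n) ?P (- ?P) (- (L * ?P))"
    unfolding G_mat_def Qm_def
    by (subst mult_four_block_mat[OF zero_carrier_mat one_carrier_mat m1 mL P zero_carrier_mat zero_carrier_mat P],
        insert L, simp)
  have rhs: "Qm n \<phi> * Gp n \<mu> = four_block_mat (?P * mat_diag n (\<lambda>k. 0)) (?P * mat_diag n (\<lambda>k. 1))
       (?P * mat_diag n (\<lambda>k. -1)) (?P * mat_diag n (\<lambda>k. - \<mu> k))"
    unfolding Gp_def Qm_def fbd_def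
    by (subst mult_four_block_mat[OF P zero_carrier_mat zero_carrier_mat P mat_diag_dim mat_diag_dim mat_diag_dim mat_diag_dim],
        insert mult_carrier_mat[OF P mat_diag_dim], simp)
  have LP: "L * ?P = ?P * mat_diag n \<mu>" by (rule L_Phi[OF L phi_dim phi_eig phi_on])
  show ?thesis unfolding lhs rhs LP
    by (intro cong_four_block_mat eq_matI, auto simp: mat_diag_mult_right[of _ n n])
qed

lemma G_carrier: "G_mat n L \<in> carrier_mat (n+n) (n+n)"
  unfolding G_mat_def using L by simp

lemma G_eq: "G_mat n L = Qm n \<phi> * Gp n \<mu> * transpose_mat (Qm n \<phi>)"
proof -
  have QQ: "Qm n \<phi> * transpose_mat (Qm n \<phi>) = 1\<^sub>m (n+n)" by (rule Q_QT[OF L phi_dim phi_eig phi_on])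
  have "G_mat n L = G_mat n L * (Qm n \<phi> * transpose_mat (Qm n \<phi>))"
    unfolding QQ using G_carrier by (simp add: right_mult_one_mat)
  also have "\<dots> = (G_mat n L * Qm n \<phi>) * transpose_mat (Qm n \<phi>)"
    using G_carrier by (subst assoc_mult_mat[of _ "n+n" "n+n" _ "n+n" _ "n+n"], auto)
  finally show ?thesis unfolding G_Q .
qed

end

lemma conj_mult: fixes Q :: "'a::comm_ring_1 mat" assumes Q: "Q \<in> carrier_mat m m" and QQ: "transpose_mat Q * Q = 1\<^sub>m m"
  and X: "X \<in> carrier_mat m m" and Y: "Y \<in> carrier_mat m m"
  shows "(Q * X * transpose_mat Q) * (Q * Y * transpose_mat Q) = Q * (X * Y) * transpose_mat Q"
proof -
  have QT: "transpose_mat Q \<in> carrier_mat m m" using Q by simp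
  have "(Q * X * transpose_mat Q) * (Q * Y * transpose_mat Q) = Q * (X * ((transpose_mat Q * Q) * (Y * transpose_mat Q)))"
    using Q QT X Y by (simp add: assoc_mult_mat[of _ m m _ m _ m] mult_carrier_mat[of _ m m _ m])
  also have "\<dots> = Q * (X * Y) * transpose_mat Q" unfolding QQ using Q QT X Y
    by (simp add: assoc_mult_mat[of _ m m _ m _ m] mult_carrier_mat[of _ m m _ m] carrier_matD[OF Y])
  finally show ?thesis .
qed

lemma conj_transpose: fixes Q :: "'a::comm_ring_1 mat" assumes Q: "Q \<in> carrier_mat m m" and X: "X \<in> carrier_mat m m"
  shows "transpose_mat (Q * X * transpose_mat Q) = Q * transpose_mat X * transpose_mat Q"
proof -
  have QT: "transpose_mat Q \<in> carrier_mat m m" using Q by simp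
  have QX: "Q * X \<in> carrier_mat m m" using Q X by simp
  have "transpose_mat (Q * X * transpose_mat Q) = transpose_mat (transpose_mat Q) * transpose_mat (Q * X)"
    by (rule transpose_mult[OF QX QT])
  also have "\<dots> = Q * (transpose_mat X * transpose_mat Q)"
    using transpose_mult[OF Q X] by simp
  also have "\<dots> = Q * transpose_mat X * transpose_mat Q"
    using Q QT X by (simp add: assoc_mult_mat[of _ m m _ m _ m])
  finally show ?thesis .
qed

lemma conj_pd: assumes Q: "Q \<in> carrier_mat m m" and QQ: "Q * transpose_mat Q = 1\<^sub>m m"
  and X: "X \<in> carrier_mat m m" and pd: "pdm m X"
  shows "pdm m (Q * X * transpose_mat Q)"
  unfolding pdm_def
proof (intro ballI impI)
  fix v :: "real vec" assume v: "v \<in> carrier_vec m" and nz: "v \<noteq> 0\<^sub>v m"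
  have QT: "transpose_mat Q \<in> carrier_mat m m" using Q by simp
  define w where "w = transpose_mat Q *\<^sub>v v"
  have w: "w \<in> carrier_vec m" unfolding w_def using QT v by simp
  have "Q *\<^sub>v w = v" unfolding w_def using Q QT v
    by (simp add: assoc_mult_mat_vec[symmetric, of _ m m _ m] QQ)
  hence wnz: "w \<noteq> 0\<^sub>v m" using nz Q
    by (auto intro!: eq_vecI simp: scalar_prod_right_zero)
  have "v \<bullet> ((Q * X * transpose_mat Q) *\<^sub>v v) = v \<bullet> (Q *\<^sub>v (X *\<^sub>v w))"
    unfolding w_def using Q QT X v by (simp add: mult_carrier_mat[of _ m m _ m] assoc_mult_mat_vec[of _ m m _ m])
  also have "\<dots> = (transpose_mat Q *\<^sub>v v) \<bullet> (X *\<^sub>v w)"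
    by (rule transpose_vec_mult_scalar[symmetric, OF Q _ v], insert X w, simp)
  also have "\<dots> = w \<bullet> (X *\<^sub>v w)" unfolding w_def ..
  also have "\<dots> > 0" using pd w wnz unfolding pdm_def by auto
  finally show "v \<bullet> ((Q * X * transpose_mat Q) *\<^sub>v v) > 0" .
qed


lemma inv_mat_eq: assumes S: "S \<in> carrier_mat m m" and B: "B \<in> carrier_mat m m"
  and SB: "S * B = 1\<^sub>m m" and BS: "B * S = 1\<^sub>m m"
  shows "inv_mat S = (B :: real mat)"
  unfolding inv_mat_def
proof (rule the_equality)
  show "B \<in> carrier_mat (dim_row S) (dim_row S) \<and> S * B = 1\<^sub>m (dim_row S) \<and> B * S = 1\<^sub>m (dim_row S)"
    using S B SB BS by simp
next
  fix C assume C: "C \<in> carrier_mat (dim_row S) (dim_row S) \<and> S * C = 1\<^sub>m (dim_row S) \<and> C * S = 1\<^sub>m (dim_row S)"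
  hence C1: "C \<in> carrier_mat m m" "C * S = 1\<^sub>m m" using S by auto
  have "C = C * (S * B)" unfolding SB using C1 by simp
  also have "\<dots> = (C * S) * B" by (rule assoc_mult_mat[symmetric, OF C1(1) S B])
  also have "\<dots> = B" unfolding C1(2) using B by simp
  finally show "C = B" .
qed

lemma pd_sqrt_eq: assumes M: "M \<in> carrier_mat m m" and S: "S \<in> carrier_mat m m"
  and Ss: "transpose_mat S = S" and Sp: "pdm m S" and SS: "S * S = M"
  shows "pd_sqrt_mat M = S"
  unfolding pd_sqrt_mat_def
proof (rule the_equality)
  show "S \<in> carrier_mat (dim_row M) (dim_row M) \<and> transpose_mat S = S \<and>
     (\<forall>v\<in>carrier_vec (dim_row M). v \<noteq> 0\<^sub>v (dim_row M) \<longrightarrow> 0 < v \<bullet> (S *\<^sub>v v)) \<and> S * S = M"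
    using M S Ss Sp SS unfolding pdm_def by simp
next
  fix T assume T: "T \<in> carrier_mat (dim_row M) (dim_row M) \<and> transpose_mat T = T \<and>
     (\<forall>v\<in>carrier_vec (dim_row M). v \<noteq> 0\<^sub>v (dim_row M) \<longrightarrow> 0 < v \<bullet> (T *\<^sub>v v)) \<and> T * T = M"
  hence T1: "T \<in> carrier_mat m m" "transpose_mat T = T" "pdm m T" "T * T = M"
    using M unfolding pdm_def by auto
  show "T = S" by (rule pd_sqrt_unique[OF T1(1) S T1(2) Ss T1(3) Sp], insert T1(4) SS, simp)
qed

context
  fixes n :: nat and L :: "real mat" and \<phi> :: "nat \<Rightarrow> real vec" and \<mu> :: "nat \<Rightarrow> real"
  assumes L: "L \<in> carrier_mat n n"
    and phi_dim: "\<And>j. j < n \<Longrightarrow> \<phi> j \<in> carrier_vec n"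
    and phi_eig: "\<And>j. j < n \<Longrightarrow> L *\<^sub>v \<phi> j = \<mu> j \<cdot>\<^sub>v \<phi> j"
    and phi_on: "\<And>i j. i < n \<Longrightarrow> j < n \<Longrightarrow> \<phi> i \<bullet> \<phi> j = (if i = j then 1 else 0)"
begin

lemma U_eq: "U_mat n L = Qm n \<phi> * Up n \<mu> * transpose_mat (Qm n \<phi>)"
proof -
  let ?Q = "Qm n \<phi>"
  let ?m = "n + n"
  have Q: "?Q \<in> carrier_mat ?m ?m" by simp
  have QTQ: "transpose_mat ?Q * ?Q = 1\<^sub>m ?m" by (rule QT_Q[OF L phi_dim phi_eig phi_on])
  have QQT: "?Q * transpose_mat ?Q = 1\<^sub>m ?m" by (rule Q_QT[OF L phi_dim phi_eig phi_on])
  have G: "G_mat n L = ?Q * Gp n \<mu> * transpose_mat ?Q" by (rule G_eq[OF L phi_dim phi_eig phi_on])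
  have GtG: "transpose_mat (G_mat n L) * G_mat n L = ?Q * Mp n \<mu> * transpose_mat ?Q"
    unfolding G conj_transpose[OF Q Gp_carrier] conj_mult[OF Q QTQ transpose_carrier_mat[THEN iffD2, OF Gp_carrier] Gp_carrier]
      GpT_Gp ..
  have C: "\<And>X. X \<in> carrier_mat ?m ?m \<Longrightarrow> ?Q * X * transpose_mat ?Q \<in> carrier_mat ?m ?m"
    using Q by (metis mult_carrier_mat transpose_carrier_mat)
  have sq: "pd_sqrt_mat (transpose_mat (G_mat n L) * G_mat n L) = ?Q * Sp n \<mu> * transpose_mat ?Q"
    unfolding GtG
  proof (rule pd_sqrt_eq[OF C[OF Mp_carrier] C[OF Sp_carrier]])
    show "transpose_mat (?Q * Sp n \<mu> * transpose_mat ?Q) = ?Q * Sp n \<mu> * transpose_mat ?Q"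
      unfolding conj_transpose[OF Q Sp_carrier] Sp_sym ..
    show "pdm ?m (?Q * Sp n \<mu> * transpose_mat ?Q)" by (rule conj_pd[OF Q QQT Sp_carrier Sp_pd])
    show "?Q * Sp n \<mu> * transpose_mat ?Q * (?Q * Sp n \<mu> * transpose_mat ?Q) = ?Q * Mp n \<mu> * transpose_mat ?Q"
      unfolding conj_mult[OF Q QTQ Sp_carrier Sp_carrier] Sp_sq ..
  qed
  have inv: "inv_mat (?Q * Sp n \<mu> * transpose_mat ?Q) = ?Q * Sip n \<mu> * transpose_mat ?Q"
  proof (rule inv_mat_eq[OF C[OF Sp_carrier] C[OF Sip_carrier]])
    show "?Q * Sp n \<mu> * transpose_mat ?Q * (?Q * Sip n \<mu> * transpose_mat ?Q) = 1\<^sub>m ?m"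
      unfolding conj_mult[OF Q QTQ Sp_carrier Sip_carrier] Sp_Sip using carrier_matD[OF Q] QQT by simp
    show "?Q * Sip n \<mu> * transpose_mat ?Q * (?Q * Sp n \<mu> * transpose_mat ?Q) = 1\<^sub>m ?m"
      unfolding conj_mult[OF Q QTQ Sip_carrier Sp_carrier] Sip_Sp using carrier_matD[OF Q] QQT by simp
  qed
  show ?thesis unfolding U_mat_def sq inv
    unfolding G conj_mult[OF Q QTQ Gp_carrier Sip_carrier] Gp_Sip ..
qed

end


definition cc :: complex where "cc = complex_of_real (1 / sqrt 2)"

lemma cc_sq: "cc * cc = 1 / 2"
proof -
  have "cc * cc = complex_of_real (1 / sqrt 2 * (1 / sqrt 2))" unfolding cc_def of_real_mult ..
  also have "1 / sqrt 2 * (1 / sqrt 2) = (1/2 :: real)"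
  proof -
    have "1 / sqrt 2 * (1 / sqrt 2) = 1 / (sqrt 2 * sqrt (2::real))" by (simp only: times_divide_times_eq mult_1)
    thus ?thesis by simp
  qed
  finally show ?thesis by simp
qed

definition Pp :: "nat \<Rightarrow> complex mat" where
  "Pp n = fbd n (\<lambda>k. cc) (\<lambda>k. cc) (\<lambda>k. \<i> * cc) (\<lambda>k. - \<i> * cc)"
definition Pim :: "nat \<Rightarrow> complex mat" where
  "Pim n = fbd n (\<lambda>k. cc) (\<lambda>k. - \<i> * cc) (\<lambda>k. cc) (\<lambda>k. \<i> * cc)"
definition Lam :: "nat \<Rightarrow> (nat \<Rightarrow> complex) \<Rightarrow> (nat \<Rightarrow> complex) \<Rightarrow> complex mat" where
  "Lam n lp lm = fbd n lp (\<lambda>k. 0) (\<lambda>k. 0) lm"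

lemma Pp_carrier[simp]: "Pp n \<in> carrier_mat (n+n) (n+n)" unfolding Pp_def by simp
lemma Pim_carrier[simp]: "Pim n \<in> carrier_mat (n+n) (n+n)" unfolding Pim_def by simp
lemma Lam_carrier[simp]: "Lam n lp lm \<in> carrier_mat (n+n) (n+n)" unfolding Lam_def by simp

lemma Lam_dims[simp]: "dim_row (Lam n lp lm) = n+n" "dim_col (Lam n lp lm) = n+n" unfolding Lam_def by auto

lemma Pp_Pim: "Pp n * Pim n = 1\<^sub>m (n+n)"
  unfolding Pp_def Pim_def fbd_mult fbd_one[symmetric]
proof (rule fbd_cong)
  fix k
  have "cc * cc + cc * cc = 1/2 + 1/2" by (simp only: cc_sq)
  hence "cc * cc + cc * cc = 1" by simp
  moreover have "\<i> * cc * cc + - \<i> * cc * cc = 0" by simp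
  moreover have "cc * (- \<i> * cc) + cc * (\<i> * cc) = 0" by simp
  moreover have "\<i> * cc * (- \<i> * cc) + - \<i> * cc * (\<i> * cc) = 1"
  proof -
    have "\<i> * cc * (- \<i> * cc) + - \<i> * cc * (\<i> * cc) = 2 * (cc * cc)" by (simp add: algebra_simps)
    thus ?thesis by (simp only: cc_sq, simp)
  qed
  ultimately show "cc * cc + cc * cc = 1 \<and> cc * (- \<i> * cc) + cc * (\<i> * cc) = 0 \<and>
      \<i> * cc * cc + - \<i> * cc * cc = 0 \<and> \<i> * cc * (- \<i> * cc) + - \<i> * cc * (\<i> * cc) = 1"
    by simp
qed

lemma Pim_Pp: "Pim n * Pp n = 1\<^sub>m (n+n)"
  by (rule mat_mult_left_right_inverse[OF _ _ Pp_Pim], auto)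

lemma Upc_Pp:
  assumes lp: "\<And>k. k < n \<Longrightarrow> lp k = complex_of_real (- \<mu> k / rr \<mu> k) + \<i> * complex_of_real (2 / rr \<mu> k)"
    and lm: "\<And>k. k < n \<Longrightarrow> lm k = complex_of_real (- \<mu> k / rr \<mu> k) - \<i> * complex_of_real (2 / rr \<mu> k)"
  shows "map_mat complex_of_real (Up n \<mu>) * Pp n = Pp n * Lam n lp lm"
  unfolding Up_def map_fbd[of complex_of_real, OF of_real_0] Pp_def Lam_def fbd_mult
proof (rule fbd_cong)
  fix k assume k: "k < n"
  define a where "a = complex_of_real (- \<mu> k / rr \<mu> k)"
  define b where "b = complex_of_real (2 / rr \<mu> k)"
  have lpk: "lp k = a + \<i> * b" and lmk: "lm k = a - \<i> * b" using lp[OF k] lm[OF k] unfolding a_def b_def by auto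
  have e: "complex_of_real (- \<mu> k / rr \<mu> k) = a" "complex_of_real (2 / rr \<mu> k) = b"
     "complex_of_real (- 2 / rr \<mu> k) = - b" unfolding a_def b_def by auto
  show "complex_of_real (- \<mu> k / rr \<mu> k) * cc + complex_of_real (2 / rr \<mu> k) * (\<i> * cc) = cc * lp k + cc * 0 \<and>
    complex_of_real (- \<mu> k / rr \<mu> k) * cc + complex_of_real (2 / rr \<mu> k) * (- \<i> * cc) = cc * 0 + cc * lm k \<and>
    complex_of_real (- 2 / rr \<mu> k) * cc + complex_of_real (- \<mu> k / rr \<mu> k) * (\<i> * cc) = \<i> * cc * lp k + - \<i> * cc * 0 \<and>
    complex_of_real (- 2 / rr \<mu> k) * cc + complex_of_real (- \<mu> k / rr \<mu> k) * (- \<i> * cc) = \<i> * cc * 0 + - \<i> * cc * lm k"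
    unfolding e lpk lmk by (simp add: algebra_simps)
qed

lemma Lam_index: "t < n + n \<Longrightarrow> s < n + n \<Longrightarrow> Lam n lp lm $$ (t, s) = (if t = s then (if t < n then lp t else lm (t - n)) else 0)"
  unfolding Lam_def fbd_def by (auto simp: mat_diag_def)

lemma Lam_ut: "upper_triangular (Lam n lp lm)"
  unfolding upper_triangular_def using Lam_carrier[of n lp lm] by (auto simp: Lam_index)

lemma char_poly_Lam: "char_poly (Lam n lp lm) = (\<Prod>j<n. [:- lp j, 1:] * [:- lm j, 1:])"
proof -
  have "char_poly (Lam n lp lm) = (\<Prod>a\<leftarrow>diag_mat (Lam n lp lm). [:- a, 1:])"
    by (rule char_poly_upper_triangular[OF Lam_carrier Lam_ut])
  also have "\<dots> = prod_list (map (\<lambda>i. [:- (Lam n lp lm $$ (i,i)), 1:]) [0..<n+n])"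
    unfolding diag_mat_def by (simp add: comp_def)
  also have "\<dots> = (\<Prod>i<n+n. [:- (Lam n lp lm $$ (i,i)), 1:])"
    by (subst prod.distinct_set_conv_list[symmetric], auto simp: lessThan_atLeast0)
  also have "\<dots> = (\<Prod>i<n. [:- lp i, 1:]) * (\<Prod>i<n. [:- lm i, 1:])"
    unfolding prod_split_nn by (simp add: Lam_index)
  also have "\<dots> = (\<Prod>j<n. [:- lp j, 1:] * [:- lm j, 1:])" by (rule prod.distrib[symmetric])
  finally show ?thesis .
qed

lemma Lam_unit: assumes j: "j < n + n"
  shows "Lam n lp lm *\<^sub>v unit_vec (n+n) j = Lam n lp lm $$ (j,j) \<cdot>\<^sub>v unit_vec (n+n) j"
proof (rule eq_vecI)
  fix t assume "t < dim_vec (Lam n lp lm $$ (j,j) \<cdot>\<^sub>v unit_vec (n+n) j)"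
  hence t: "t < n + n" by simp
  have "(Lam n lp lm *\<^sub>v unit_vec (n+n) j) $ t = row (Lam n lp lm) t $ j" using t j by simp
  also have "\<dots> = Lam n lp lm $$ (t, j)" using t j by simp
  finally show "(Lam n lp lm *\<^sub>v unit_vec (n+n) j) $ t = (Lam n lp lm $$ (j,j) \<cdot>\<^sub>v unit_vec (n+n) j) $ t"
    using t j by (simp add: Lam_index)
qed simp


context
  fixes n :: nat and L :: "real mat" and \<phi> :: "nat \<Rightarrow> real vec" and \<mu> :: "nat \<Rightarrow> real"
  assumes L: "L \<in> carrier_mat n n"
    and phi_dim: "\<And>j. j < n \<Longrightarrow> \<phi> j \<in> carrier_vec n"
    and phi_eig: "\<And>j. j < n \<Longrightarrow> L *\<^sub>v \<phi> j = \<mu> j \<cdot>\<^sub>v \<phi> j"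
    and phi_on: "\<And>i j. i < n \<Longrightarrow> j < n \<Longrightarrow> \<phi> i \<bullet> \<phi> j = (if i = j then 1 else 0)"
begin

definition "Qc = map_mat complex_of_real (Qm n \<phi>)"
definition "Wm = Qc * Pp n"
definition "Wi = Pim n * transpose_mat Qc"

lemma Qc_carrier[simp]: "Qc \<in> carrier_mat (n+n) (n+n)" unfolding Qc_def by simp
lemma Qc_dims[simp]: "dim_row Qc = n+n" "dim_col Qc = n+n" using Qc_carrier by (auto simp del: Qc_carrier)
lemma Wm_carrier[simp]: "Wm \<in> carrier_mat (n+n) (n+n)" unfolding Wm_def by (rule mult_carrier_mat[OF Qc_carrier Pp_carrier])
lemma Wm_dims[simp]: "dim_row Wm = n+n" "dim_col Wm = n+n" using Wm_carrier by (auto simp del: Wm_carrier)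
lemma Wi_carrier[simp]: "Wi \<in> carrier_mat (n+n) (n+n)" unfolding Wi_def
  by (rule mult_carrier_mat[OF Pim_carrier], simp)

lemma QTQ: "transpose_mat (Qm n \<phi>) * Qm n \<phi> = 1\<^sub>m (n+n)" by (rule QT_Q[OF L phi_dim phi_eig phi_on])
lemma Ueq: "U_mat n L = Qm n \<phi> * Up n \<mu> * transpose_mat (Qm n \<phi>)" by (rule U_eq[OF L phi_dim phi_eig phi_on])

lemma QcT_Qc: "transpose_mat Qc * Qc = 1\<^sub>m (n+n)"
proof -
  have "transpose_mat Qc * Qc = map_mat complex_of_real (transpose_mat (Qm n \<phi>) * Qm n \<phi>)"
    unfolding Qc_def map_mat_transpose
    by (rule of_real_hom.mat_hom_mult[symmetric], auto)
  also have "\<dots> = 1\<^sub>m (n+n)" unfolding QTQ by (rule of_real_hom.mat_hom_one)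
  finally show ?thesis .
qed

lemma Qc_QcT: "Qc * transpose_mat Qc = 1\<^sub>m (n+n)"
  by (rule mat_mult_left_right_inverse[OF _ _ QcT_Qc], auto)

lemma Uc_eq: "map_mat complex_of_real (U_mat n L) = Qc * map_mat complex_of_real (Up n \<mu>) * transpose_mat Qc"
proof -
  have QT: "transpose_mat (Qm n \<phi>) \<in> carrier_mat (n+n) (n+n)" by simp
  have "map_mat complex_of_real (Qm n \<phi> * Up n \<mu> * transpose_mat (Qm n \<phi>)) =
    map_mat complex_of_real (Qm n \<phi> * Up n \<mu>) * map_mat complex_of_real (transpose_mat (Qm n \<phi>))"
    by (rule of_real_hom.mat_hom_mult[OF mult_carrier_mat[OF Qm_carrier Up_carrier] QT])
  also have "map_mat complex_of_real (Qm n \<phi> * Up n \<mu>) = map_mat complex_of_real (Qm n \<phi>) * map_mat complex_of_real (Up n \<mu>)"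
    by (rule of_real_hom.mat_hom_mult[OF Qm_carrier Up_carrier])
  finally show ?thesis unfolding Ueq Qc_def map_mat_transpose .
qed

lemma W_Wi: "Wm * Wi = 1\<^sub>m (n+n)"
proof -
  have "Wm * Wi = Qc * ((Pp n * Pim n) * transpose_mat Qc)"
    unfolding Wm_def Wi_def
    by (simp add: assoc_mult_mat[of _ "n+n" "n+n" _ "n+n" _ "n+n"] mult_carrier_mat[of _ "n+n" "n+n" _ "n+n"])
  also have "\<dots> = 1\<^sub>m (n+n)" unfolding Pp_Pim using Qc_QcT by (simp add: left_mult_one_mat')
  finally show ?thesis .
qed

lemma Wi_W: "Wi * Wm = 1\<^sub>m (n+n)"
  by (rule mat_mult_left_right_inverse[OF _ _ W_Wi], auto)

lemma UW:
  assumes lp: "\<And>k. k < n \<Longrightarrow> lp k = complex_of_real (- \<mu> k / rr \<mu> k) + \<i> * complex_of_real (2 / rr \<mu> k)"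
    and lm: "\<And>k. k < n \<Longrightarrow> lm k = complex_of_real (- \<mu> k / rr \<mu> k) - \<i> * complex_of_real (2 / rr \<mu> k)"
  shows "map_mat complex_of_real (U_mat n L) * Wm = Wm * Lam n lp lm"
proof -
  let ?U = "map_mat complex_of_real (Up n \<mu>)"
  have U: "?U \<in> carrier_mat (n+n) (n+n)" by simp
  have "map_mat complex_of_real (U_mat n L) * Wm = Qc * (?U * ((transpose_mat Qc * Qc) * Pp n))"
    unfolding Uc_eq Wm_def using U
    by (simp add: assoc_mult_mat[of _ "n+n" "n+n" _ "n+n" _ "n+n"] mult_carrier_mat[of _ "n+n" "n+n" _ "n+n"])
  also have "\<dots> = Qc * (?U * Pp n)" unfolding QcT_Qc by (simp add: left_mult_one_mat' carrier_matD[OF Pp_carrier])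
  also have "\<dots> = Qc * (Pp n * Lam n lp lm)" by (simp only: Upc_Pp[OF lp lm])
  also have "\<dots> = Wm * Lam n lp lm" unfolding Wm_def by (rule assoc_mult_mat[symmetric, OF Qc_carrier Pp_carrier Lam_carrier])
  finally show ?thesis .
qed

definition "Phc = map_mat complex_of_real (Phi n \<phi>)"

lemma Phc_carrier[simp]: "Phc \<in> carrier_mat n n" unfolding Phc_def by simp
lemma Phc_index: "t < n \<Longrightarrow> s < n \<Longrightarrow> Phc $$ (t, s) = complex_of_real (\<phi> s $ t)"
  unfolding Phc_def by (simp add: Phi_def)

lemma Qc4: "Qc = four_block_mat Phc (0\<^sub>m n n) (0\<^sub>m n n) Phc"
  unfolding Qc_def Qm_def Phc_def
  by (subst map_four_block_mat[OF Phi_carrier zero_carrier_mat zero_carrier_mat Phi_carrier],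
      intro cong_four_block_mat refl eq_matI, auto)

lemma Wm4: "Wm = four_block_mat (Phc * mat_diag n (\<lambda>k. cc)) (Phc * mat_diag n (\<lambda>k. cc))
   (Phc * mat_diag n (\<lambda>k. \<i> * cc)) (Phc * mat_diag n (\<lambda>k. - \<i> * cc))"
proof -
  have c: "\<And>f. Phc * mat_diag n f \<in> carrier_mat n n" by (rule mult_carrier_mat[OF Phc_carrier mat_diag_dim])
  show ?thesis unfolding Wm_def Qc4 Pp_def fbd_def
    by (subst mult_four_block_mat[OF Phc_carrier zero_carrier_mat zero_carrier_mat Phc_carrier
        mat_diag_dim mat_diag_dim mat_diag_dim mat_diag_dim], insert c, simp)
qed

lemma Wm_index1: assumes t: "t < n + n" and s: "s < n"
  shows "Wm $$ (t, s) = (if t < n then complex_of_real (\<phi> s $ t) * cc else complex_of_real (\<phi> s $ (t - n)) * (\<i> * cc))"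
  unfolding Wm4 using t s by (simp add: mat_diag_mult_right[of _ n n] Phc_index)

lemma Wm_index2: assumes t: "t < n + n" and s: "s < n"
  shows "Wm $$ (t, n + s) = (if t < n then complex_of_real (\<phi> s $ t) * cc else complex_of_real (\<phi> s $ (t - n)) * (- \<i> * cc))"
  unfolding Wm4 using t s by (simp add: mat_diag_mult_right[of _ n n] Phc_index)

lemma Wm_unit: assumes s: "s < n + n" and t: "t < n + n"
  shows "(Wm *\<^sub>v unit_vec (n+n) s) $ t = Wm $$ (t, s)"
  using s t by simp

lemma psi_p: assumes j: "j < n"
  shows "complex_of_real (1 / sqrt 2) \<cdot>\<^sub>v (map_vec complex_of_real (\<phi> j) @\<^sub>v (\<i> \<cdot>\<^sub>v map_vec complex_of_real (\<phi> j)))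
    = Wm *\<^sub>v unit_vec (n+n) j"
proof -
  have d: "dim_vec (\<phi> j) = n" using phi_dim[OF j] by auto
  show ?thesis
  proof (rule eq_vecI)
    fix t assume "t < dim_vec (Wm *\<^sub>v unit_vec (n+n) j)"
    hence t: "t < n + n" by simp
    show "(complex_of_real (1 / sqrt 2) \<cdot>\<^sub>v (map_vec complex_of_real (\<phi> j) @\<^sub>v (\<i> \<cdot>\<^sub>v map_vec complex_of_real (\<phi> j)))) $ t
      = (Wm *\<^sub>v unit_vec (n+n) j) $ t"
      unfolding Wm_unit[OF _ t] using t j d by (simp add: Wm_index1 cc_def algebra_simps)
  qed (insert d, simp)
qed

lemma psi_m: assumes j: "j < n"
  shows "complex_of_real (1 / sqrt 2) \<cdot>\<^sub>v (map_vec complex_of_real (\<phi> j) @\<^sub>v ((- \<i>) \<cdot>\<^sub>v map_vec complex_of_real (\<phi> j)))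
    = Wm *\<^sub>v unit_vec (n+n) (n + j)"
proof -
  have d: "dim_vec (\<phi> j) = n" using phi_dim[OF j] by auto
  show ?thesis
  proof (rule eq_vecI)
    fix t assume "t < dim_vec (Wm *\<^sub>v unit_vec (n+n) (n + j))"
    hence t: "t < n + n" by simp
    show "(complex_of_real (1 / sqrt 2) \<cdot>\<^sub>v (map_vec complex_of_real (\<phi> j) @\<^sub>v ((- \<i>) \<cdot>\<^sub>v map_vec complex_of_real (\<phi> j)))) $ t
      = (Wm *\<^sub>v unit_vec (n+n) (n + j)) $ t"
      using t j d by (simp add: Wm_unit[OF _ t] Wm_index2[OF t j] cc_def)
  qed (insert d, simp)
qed

lemma phi_sq: assumes j: "j < n" shows "(\<Sum>i<n. complex_of_real (\<phi> j $ i) * complex_of_real (\<phi> j $ i)) = 1"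
proof -
  have d: "dim_vec (\<phi> j) = n" using phi_dim[OF j] by auto
  have "(\<Sum>i<n. \<phi> j $ i * \<phi> j $ i) = \<phi> j \<bullet> \<phi> j" unfolding scalar_prod_def d by (simp add: lessThan_atLeast0)
  also have "\<dots> = 1" using phi_on[OF j j] by simp
  finally have "complex_of_real (\<Sum>i<n. \<phi> j $ i * \<phi> j $ i) = 1" by simp
  thus ?thesis by simp
qed

lemma norm_gen: assumes j: "j < n" and z: "cnj z * z = 1"
  shows "(complex_of_real (1 / sqrt 2) \<cdot>\<^sub>v (map_vec complex_of_real (\<phi> j) @\<^sub>v (z \<cdot>\<^sub>v map_vec complex_of_real (\<phi> j))))
     \<bullet>c (complex_of_real (1 / sqrt 2) \<cdot>\<^sub>v (map_vec complex_of_real (\<phi> j) @\<^sub>v (z \<cdot>\<^sub>v map_vec complex_of_real (\<phi> j)))) = 1"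
  (is "?v \<bullet>c ?v = 1")
proof -
  have d: "dim_vec (\<phi> j) = n" using phi_dim[OF j] by auto
  have dv: "dim_vec ?v = n + n" using d by simp
  have "?v \<bullet>c ?v = (\<Sum>t<n+n. ?v $ t * cnj (?v $ t))"
    unfolding scalar_prod_def conjugate_vec_def using dv by (simp add: lessThan_atLeast0)
  also have "\<dots> = (\<Sum>i<n. ?v $ i * cnj (?v $ i)) + (\<Sum>i<n. ?v $ (n+i) * cnj (?v $ (n+i)))"
    by (rule sum_split_nn)
  also have "(\<Sum>i<n. ?v $ i * cnj (?v $ i)) = cc * cc * (\<Sum>i<n. complex_of_real (\<phi> j $ i) * complex_of_real (\<phi> j $ i))"
    unfolding sum_distrib_left by (rule sum.cong, insert d, auto simp: cc_def algebra_simps)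
  also have "(\<Sum>i<n. ?v $ (n+i) * cnj (?v $ (n+i))) = cc * cc * (\<Sum>i<n. complex_of_real (\<phi> j $ i) * complex_of_real (\<phi> j $ i))"
  proof -
    have "\<And>i. i < n \<Longrightarrow> ?v $ (n+i) * cnj (?v $ (n+i)) = cc * cc * (complex_of_real (\<phi> j $ i) * complex_of_real (\<phi> j $ i)) * (cnj z * z)"
      using d by (simp add: cc_def algebra_simps)
    thus ?thesis unfolding sum_distrib_left z by simp
  qed
  finally show ?thesis unfolding phi_sq[OF j] using cc_sq by simp
qed

lemma Uc_carrier: "map_mat complex_of_real (U_mat n L) \<in> carrier_mat (n+n) (n+n)"
  unfolding Ueq by (simp add: mult_carrier_mat[of _ "n+n" "n+n" _ "n+n"])

lemma eig_step: assumes UW: "U * Wm = Wm * Lam n lp lm" and U: "U \<in> carrier_mat (n+n) (n+n)"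
  and s: "s < n + n"
  shows "U *\<^sub>v (Wm *\<^sub>v unit_vec (n+n) s) = Lam n lp lm $$ (s,s) \<cdot>\<^sub>v (Wm *\<^sub>v unit_vec (n+n) s)"
proof -
  have e: "unit_vec (n+n) s \<in> carrier_vec (n+n)" by simp
  have "U *\<^sub>v (Wm *\<^sub>v unit_vec (n+n) s) = (U * Wm) *\<^sub>v unit_vec (n+n) s"
    by (rule assoc_mult_mat_vec[symmetric, OF U Wm_carrier e])
  also have "\<dots> = Wm *\<^sub>v (Lam n lp lm *\<^sub>v unit_vec (n+n) s)"
    unfolding UW by (rule assoc_mult_mat_vec[OF Wm_carrier Lam_carrier e])
  also have "\<dots> = Wm *\<^sub>v (Lam n lp lm $$ (s,s) \<cdot>\<^sub>v unit_vec (n+n) s)" by (simp only: Lam_unit[OF s])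
  also have "\<dots> = Lam n lp lm $$ (s,s) \<cdot>\<^sub>v (Wm *\<^sub>v unit_vec (n+n) s)"
    by (rule mult_mat_vec[OF Wm_carrier e])
  finally show ?thesis .
qed

lemma main:
  assumes hU: "U = map_mat complex_of_real (U_mat n L)"
  and h\<theta>: "\<theta> = (\<lambda>j. 2 * arctan ((sqrt ((\<mu> j)\<^sup>2 + 4) + \<mu> j) / 2))"
  and hlp: "lp = (\<lambda>j. complex_of_real (cos (\<theta> j)) + \<i> * complex_of_real (sin (\<theta> j)))"
  and hlm: "lm = (\<lambda>j. complex_of_real (cos (\<theta> j)) - \<i> * complex_of_real (sin (\<theta> j)))"
  and hpp: "\<psi>p = (\<lambda>j. complex_of_real (1 / sqrt 2) \<cdot>\<^sub>v (map_vec complex_of_real (\<phi> j) @\<^sub>v (\<i> \<cdot>\<^sub>v map_vec complex_of_real (\<phi> j))))"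
  and hpm: "\<psi>m = (\<lambda>j. complex_of_real (1 / sqrt 2) \<cdot>\<^sub>v (map_vec complex_of_real (\<phi> j) @\<^sub>v ((- \<i>) \<cdot>\<^sub>v map_vec complex_of_real (\<phi> j))))"
  shows "(\<forall>j<n. lp j = exp (\<i> * complex_of_real (\<theta> j)) \<and> lm j = exp (- \<i> * complex_of_real (\<theta> j)) \<and>
                   eigenvector U (\<psi>p j) (lp j) \<and> eigenvector U (\<psi>m j) (lm j) \<and>
                   \<psi>p j \<bullet>c \<psi>p j = 1 \<and> \<psi>m j \<bullet>c \<psi>m j = 1)
            \<and> char_poly U = (\<Prod>j<n. [:- lp j, 1:] * [:- lm j, 1:])"
proof -
  have cs: "\<And>k. cos (\<theta> k) = - \<mu> k / rr \<mu> k \<and> sin (\<theta> k) = 2 / rr \<mu> k"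
    using trig_facts unfolding h\<theta> rr_def by simp
  have lpk: "\<And>k. k < n \<Longrightarrow> lp k = complex_of_real (- \<mu> k / rr \<mu> k) + \<i> * complex_of_real (2 / rr \<mu> k)"
    unfolding hlp using cs by simp
  have lmk: "\<And>k. k < n \<Longrightarrow> lm k = complex_of_real (- \<mu> k / rr \<mu> k) - \<i> * complex_of_real (2 / rr \<mu> k)"
    unfolding hlm using cs by simp
  have U: "U \<in> carrier_mat (n+n) (n+n)" unfolding hU by (rule Uc_carrier)
  have UWm: "U * Wm = Wm * Lam n lp lm" unfolding hU by (rule UW[OF lpk lmk])
  have "U = U * (Wm * Wi)" unfolding W_Wi by (rule right_mult_one_mat[OF U, symmetric])
  also have "\<dots> = (U * Wm) * Wi" by (rule assoc_mult_mat[symmetric, OF U Wm_carrier Wi_carrier])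
  finally have Ueq2: "U = Wm * Lam n lp lm * Wi" unfolding UWm .
  have sim: "similar_mat U (Lam n lp lm)"
    by (rule similar_matI[OF _ W_Wi Wi_W Ueq2], insert U, simp)
  have cp: "char_poly U = (\<Prod>j<n. [:- lp j, 1:] * [:- lm j, 1:])"
    by (simp only: char_poly_similar[OF sim] char_poly_Lam)
  have dU: "dim_row U = n + n" using U by simp
  have all: "\<forall>j<n. lp j = exp (\<i> * complex_of_real (\<theta> j)) \<and> lm j = exp (- \<i> * complex_of_real (\<theta> j)) \<and>
                   eigenvector U (\<psi>p j) (lp j) \<and> eigenvector U (\<psi>m j) (lm j) \<and>
                   \<psi>p j \<bullet>c \<psi>p j = 1 \<and> \<psi>m j \<bullet>c \<psi>m j = 1"
  proof (intro allI impI)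
    fix j assume j: "j < n"
    have e1: "lp j = exp (\<i> * complex_of_real (\<theta> j))"
      unfolding cis_conv_exp[symmetric] hlp by (simp add: complex_eq_iff)
    have e2: "lm j = exp (- \<i> * complex_of_real (\<theta> j))"
    proof -
      have "exp (- \<i> * complex_of_real (\<theta> j)) = exp (\<i> * complex_of_real (- \<theta> j))" by simp
      also have "\<dots> = cis (- \<theta> j)" by (rule cis_conv_exp[symmetric])
      finally show ?thesis unfolding hlm by (simp add: complex_eq_iff)
    qed
    have n1: "\<psi>p j \<bullet>c \<psi>p j = 1" unfolding hpp by (rule norm_gen[OF j], simp)
    have n2: "\<psi>m j \<bullet>c \<psi>m j = 1" unfolding hpm by (rule norm_gen[OF j], simp)
    have p: "\<psi>p j = Wm *\<^sub>v unit_vec (n+n) j" unfolding hpp using psi_p[OF j] by simp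
    have m: "\<psi>m j = Wm *\<^sub>v unit_vec (n+n) (n + j)" unfolding hpm using psi_m[OF j] by simp
    have ev1: "eigenvector U (\<psi>p j) (lp j)"
      unfolding eigenvector_def dU
    proof (intro conjI)
      show "\<psi>p j \<in> carrier_vec (n + n)" unfolding p by (rule mult_mat_vec_carrier[OF Wm_carrier unit_vec_carrier])
      show "\<psi>p j \<noteq> 0\<^sub>v (n + n)" using n1 by auto
      show "U *\<^sub>v \<psi>p j = lp j \<cdot>\<^sub>v \<psi>p j" proof -
        have jj: "j < n + n" using j by simp
        have "Lam n lp lm $$ (j, j) = lp j" using j by (simp add: Lam_index)
        thus ?thesis unfolding p eig_step[OF UWm U jj] by simp
      qed
    qed
    have ev2: "eigenvector U (\<psi>m j) (lm j)"
      unfolding eigenvector_def dU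
    proof (intro conjI)
      show "\<psi>m j \<in> carrier_vec (n + n)" unfolding m by (rule mult_mat_vec_carrier[OF Wm_carrier unit_vec_carrier])
      show "\<psi>m j \<noteq> 0\<^sub>v (n + n)" using n2 by auto
      show "U *\<^sub>v \<psi>m j = lm j \<cdot>\<^sub>v \<psi>m j" proof -
        have jj: "n + j < n + n" using j by simp
        have "Lam n lp lm $$ (n + j, n + j) = lm j" using j by (simp add: Lam_index)
        thus ?thesis unfolding m eig_step[OF UWm U jj] by simp
      qed
    qed
    show "lp j = exp (\<i> * complex_of_real (\<theta> j)) \<and> lm j = exp (- \<i> * complex_of_real (\<theta> j)) \<and>
                   eigenvector U (\<psi>p j) (lp j) \<and> eigenvector U (\<psi>m j) (lm j) \<and>
                   \<psi>p j \<bullet>c \<psi>p j = 1 \<and> \<psi>m j \<bullet>c \<psi>m j = 1"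
      using e1 e2 ev1 ev2 n1 n2 by (intro conjI)
  qed
  show ?thesis by (rule conjI[OF all cp])
qed

end

theorem proposition7:
  fixes n :: nat and A :: "real mat" and \<phi> :: "nat \<Rightarrow> real vec" and \<mu> :: "nat \<Rightarrow> real"
  assumes graph: "simple_graph_adj n A"
    and conn: "connected_adj n A"
    and phi_dim: "\<And>j. j < n \<Longrightarrow> \<phi> j \<in> carrier_vec n"
    and phi_eig: "\<And>j. j < n \<Longrightarrow> laplacian n A *\<^sub>v \<phi> j = \<mu> j \<cdot>\<^sub>v \<phi> j"
    and phi_on: "\<And>i j. i < n \<Longrightarrow> j < n \<Longrightarrow> \<phi> i \<bullet> \<phi> j = (if i = j then 1 else 0)"
  shows "let U = map_mat complex_of_real (U_mat n (laplacian n A));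
             lamP = (\<lambda>j. (sqrt ((\<mu> j)\<^sup>2 + 4) + \<mu> j) / 2);
             \<theta> = (\<lambda>j. 2 * arctan (lamP j));
             lp = (\<lambda>j. complex_of_real (cos (\<theta> j)) + \<i> * complex_of_real (sin (\<theta> j)));
             lm = (\<lambda>j. complex_of_real (cos (\<theta> j)) - \<i> * complex_of_real (sin (\<theta> j)));
             \<phi>c = (\<lambda>j. map_vec complex_of_real (\<phi> j));
             \<psi>p = (\<lambda>j. complex_of_real (1 / sqrt 2) \<cdot>\<^sub>v (\<phi>c j @\<^sub>v (\<i> \<cdot>\<^sub>v \<phi>c j)));
             \<psi>m = (\<lambda>j. complex_of_real (1 / sqrt 2) \<cdot>\<^sub>v (\<phi>c j @\<^sub>v ((- \<i>) \<cdot>\<^sub>v \<phi>c j)))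
         in (\<forall>j<n. lp j = exp (\<i> * complex_of_real (\<theta> j)) \<and> lm j = exp (- \<i> * complex_of_real (\<theta> j)) \<and>
                   eigenvector U (\<psi>p j) (lp j) \<and> eigenvector U (\<psi>m j) (lm j) \<and>
                   \<psi>p j \<bullet>c \<psi>p j = 1 \<and> \<psi>m j \<bullet>c \<psi>m j = 1)
            \<and> char_poly U = (\<Prod>j<n. [:- lp j, 1:] * [:- lm j, 1:])"
proof -
  have L: "laplacian n A \<in> carrier_mat n n"
    using graph unfolding simple_graph_adj_def laplacian_def degree_mat_def
    by (auto intro: minus_carrier_mat)
  show ?thesis unfolding Let_def
    by (rule main[OF L phi_dim phi_eig phi_on refl refl refl refl refl refl])
qed

end
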